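(* Let $C>0$, $c_{1,i}=\frac{\beta_i}{2C}$, $r=\sqrt{u^2+v^2}$ and for $i=1,2$ $\varphi_{1,i}(u,v,z)=\frac{r^{p_i}z^{q_i}}{(C^{-2}+1)^{\beta_i/2}}\left|\frac{r}{v}\right|^{\beta_i}+c_{1,i}r^{p_i}z^{q_i}\left|\frac{r}{v}\right|^{\beta_i}\int_{u/|v|}^{1/C}(t^2+1)^{\frac{\alpha_i-\beta_i-1}{2}}\,dt.$ Then for all $r_*>0$ sufficiently large, on $\mathcal{R}_1=\{(u,v,z): r\ge r_*,\ C^{-1}|v|\ge u\ge-C|v|,\ 0<z\le1\}$, $\mathcal{L}\varphi_{1,i}(u,v,z)\le-\frac{c_{1,i}}{2}r^{p_i+1}z^{q_i}\left|\frac{r}{v}\right|^{\alpha_i}$, $i=1,2$, and for all $(u,v,1)\in\mathcal{R}_1$, $\mathcal{Q}(\varphi_{1,1}+\varphi_{1,2})(u,v,1)\le-\left(\tfrac{q_2}{2}-\tfrac{p_2}{6}\right)r^{p_2}.$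
   Context: Fix $\gamma>0$, $h\in(0,1)$, $\kappa_1,\kappa_2>0$ and $\alpha_h=\frac13+\frac23h$. Constants $p_i,q_i,\alpha_i,\beta_i$ ($i=1,2$) satisfy $p_1>0$, $p_2>0$, $q_1=0$, $q_2>0$, $0<\alpha_hp_i-(1-h)q_i=\beta_i<\alpha_i<1$, $q_2>\frac13p_2+\frac12\alpha_2$, $p_2>p_1$, $p_2+\frac32\alpha_2>p_1+\frac32\alpha_1$. The operators are $\mathcal{L}=-\gamma u\partial_u-\gamma v\partial_v-\frac{\alpha_hu^2-v^2}{z^{2/3}}\partial_u-(\alpha_h+1)\frac{uv}{z^{2/3}}\partial_v+(1-h)uz^{1/3}\partial_z+\frac{\kappa_1}{z^{2/3}}\partial_u^2+\frac{\kappa_2}{z^{2/3}}\partial_v^2$, $\mathcal{Q}=\frac{u}{3z}\partial_u+\frac{v}{3z}\partial_v-\partial_z$. *)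

theory Defs
  imports "HOL-Analysis.Analysis"
begin

definition alpha_h :: "real \<Rightarrow> real" where
  "alpha_h h = 1/3 + 2/3 * h"

definition pd_u :: "(real \<Rightarrow> real \<Rightarrow> real \<Rightarrow> real) \<Rightarrow> real \<Rightarrow> real \<Rightarrow> real \<Rightarrow> real" where
  "pd_u f u v z = deriv (\<lambda>x. f x v z) u"
definition pd_v :: "(real \<Rightarrow> real \<Rightarrow> real \<Rightarrow> real) \<Rightarrow> real \<Rightarrow> real \<Rightarrow> real \<Rightarrow> real" where
  "pd_v f u v z = deriv (\<lambda>y. f u y z) v"
definition pd_z :: "(real \<Rightarrow> real \<Rightarrow> real \<Rightarrow> real) \<Rightarrow> real \<Rightarrow> real \<Rightarrow> real \<Rightarrow> real" where
  "pd_z f u v z = deriv (\<lambda>w. f u v w) z"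

definition Lop :: "real \<Rightarrow> real \<Rightarrow> real \<Rightarrow> real \<Rightarrow> (real \<Rightarrow> real \<Rightarrow> real \<Rightarrow> real)
    \<Rightarrow> real \<Rightarrow> real \<Rightarrow> real \<Rightarrow> real" where
  "Lop \<gamma> h \<kappa>1 \<kappa>2 f u v z =
     - \<gamma> * u * pd_u f u v z - \<gamma> * v * pd_v f u v z
     - (alpha_h h * u^2 - v^2) / z powr (2/3) * pd_u f u v z
     - (alpha_h h + 1) * u * v / z powr (2/3) * pd_v f u v z
     + (1 - h) * u * z powr (1/3) * pd_z f u v z
     + \<kappa>1 / z powr (2/3) * pd_u (pd_u f) u v z
     + \<kappa>2 / z powr (2/3) * pd_v (pd_v f) u v z"

definition Qop :: "(real \<Rightarrow> real \<Rightarrow> real \<Rightarrow> real) \<Rightarrow> real \<Rightarrow> real \<Rightarrow> real \<Rightarrow> real" where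
  "Qop f u v z = u / (3*z) * pd_u f u v z + v / (3*z) * pd_v f u v z - pd_z f u v z"

text \<open>The test function phi_{1,i} with parameters C, p = p_i, q = q_i,
  a = alpha_i, b = beta_i; the integral is the oriented interval integral.\<close>
definition phi1 :: "real \<Rightarrow> real \<Rightarrow> real \<Rightarrow> real \<Rightarrow> real \<Rightarrow> real \<Rightarrow> real \<Rightarrow> real \<Rightarrow> real" where
  "phi1 C p q a b u v z =
     (let r = sqrt (u^2 + v^2); c = b / (2*C) in
      r powr p * z powr q / (C powr (-2) + 1) powr (b/2) * \<bar>r / v\<bar> powr b
      + c * r powr p * z powr q * \<bar>r / v\<bar> powr b *
        (LBINT t = u / \<bar>v\<bar>..1/C. (t^2 + 1) powr ((a - b - 1)/2)))"

definition region1 :: "real \<Rightarrow> real \<Rightarrow> real \<Rightarrow> real \<Rightarrow> real \<Rightarrow> bool" where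
  "region1 rs C u v z \<longleftrightarrow> sqrt (u^2 + v^2) \<ge> rs \<and> \<bar>v\<bar> / C \<ge> u \<and> u \<ge> - C * \<bar>v\<bar>
      \<and> 0 < z \<and> z \<le> 1"

end

theory Submission
  imports Defs
begin

lemma P_pos[simp]: "(s::real)^2 + 1 > 0" by (smt (verit) zero_le_power2)
lemma P_ne[simp]: "(s::real)^2 + 1 \<noteq> 0" by (smt (verit) zero_le_power2)

lemma I_deriv:
  fixes e x s :: real
  shows "((\<lambda>s. LBINT t=s..x. (t^2+1) powr e) has_real_derivative -((s^2+1) powr e)) (at s)"
proof -
  define a where "a = min s x - 1"
  define b where "b = max s x + 1"
  have cont: "continuous_on {a..b} (\<lambda>t::real. (t^2+1) powr e)"
    by (intro continuous_intros) auto
  have "((\<lambda>u. LBINT y=x..u. (y^2+1) powr e) has_vector_derivative ((s^2+1) powr e)) (at s within {a..b})"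
    by (rule interval_integral_FTC2[OF _ _ cont]) (auto simp: a_def b_def)
  moreover have "at s within {a..b} = at s"
    by (rule at_within_Icc_at) (auto simp: a_def b_def)
  ultimately have "((\<lambda>u. LBINT y=x..u. (y^2+1) powr e) has_real_derivative ((s^2+1) powr e)) (at s)"
    by (simp add: has_real_derivative_iff_has_vector_derivative)
  then have "((\<lambda>u. - (LBINT y=x..u. (y^2+1) powr e)) has_real_derivative -((s^2+1) powr e)) (at s)"
    by (rule DERIV_minus)
  then show ?thesis
    by (subst interval_integral_endpoints_reverse) simp
qed

lemma dP: fixes s k :: real shows "((\<lambda>s. (s^2+1) powr k) has_real_derivative k * (s^2+1) powr (k-1) * (2 * s)) (at s)"
proof -
  have "((\<lambda>s. s^2+1) has_real_derivative 2 * s) (at s)"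
    by (auto intro!: derivative_eq_intros)
  from DERIV_fun_powr[OF this P_pos, of k] show ?thesis by simp
qed

definition Bfn :: "real \<Rightarrow> real \<Rightarrow> real \<Rightarrow> real \<Rightarrow> real" where
  "Bfn C a b s = 1 / (C powr (-2) + 1) powr (b/2) + b/(2 * C) * (LBINT t = s..1/C. (t^2 + 1) powr ((a - b - 1)/2))"
definition Hfn :: "real \<Rightarrow> real \<Rightarrow> real \<Rightarrow> real \<Rightarrow> real \<Rightarrow> real" where
  "Hfn C p a b s = (s^2+1) powr ((p+b)/2) * Bfn C a b s"
definition H1fn :: "real \<Rightarrow> real \<Rightarrow> real \<Rightarrow> real \<Rightarrow> real \<Rightarrow> real" where
  "H1fn C p a b s = (p+b) * s * (s^2+1) powr ((p+b)/2 - 1) * Bfn C a b s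
     - b/(2 * C) * (s^2+1) powr ((p+b)/2 + (a-b-1)/2)"
definition H2fn :: "real \<Rightarrow> real \<Rightarrow> real \<Rightarrow> real \<Rightarrow> real \<Rightarrow> real" where
  "H2fn C p a b s = (p+b) * ((s^2+1) powr ((p+b)/2 - 1) * Bfn C a b s
     + s * (((p+b)/2 - 1) * (s^2+1) powr ((p+b)/2 - 1 - 1) * (2 * s)) * Bfn C a b s
     + s * (s^2+1) powr ((p+b)/2 - 1) * (- (b/(2 * C) * (s^2+1) powr ((a-b-1)/2))))
     - b/(2 * C) * (((p+b)/2 + (a-b-1)/2) * (s^2+1) powr ((p+b)/2 + (a-b-1)/2 - 1) * (2 * s))"

lemma dB: "(Bfn C a b has_real_derivative - (b/(2 * C) * (s^2+1) powr ((a-b-1)/2))) (at s)"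
  unfolding Bfn_def[abs_def]
  by (rule DERIV_cong[OF DERIV_add[OF DERIV_const DERIV_cmult[OF I_deriv]]]) simp

lemma dH: "(Hfn C p a b has_real_derivative H1fn C p a b s) (at s)"
  unfolding Hfn_def[abs_def]
proof (rule DERIV_cong[OF DERIV_mult[OF dP dB]])
  have "(s^2+1) powr ((p+b)/2) * (s^2+1) powr ((a-b-1)/2) = (s^2+1) powr ((p+b)/2 + (a-b-1)/2)"
    by (simp add: powr_add)
  then show "(p + b) / 2 * (s\<^sup>2 + 1) powr ((p + b) / 2 - 1) * (2 * s) * Bfn C a b s +
    - (b / (2 * C) * (s\<^sup>2 + 1) powr ((a - b - 1) / 2)) * (s\<^sup>2 + 1) powr ((p + b) / 2) =
    H1fn C p a b s" unfolding H1fn_def by (simp add: algebra_simps)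
qed

lemma dH1: "(H1fn C p a b has_real_derivative H2fn C p a b s) (at s)"
proof -
  have e: "H1fn C p a b = (\<lambda>s. (p+b) * (s * (s^2+1) powr ((p+b)/2 - 1) * Bfn C a b s)
     - b/(2 * C) * (s^2+1) powr ((p+b)/2 + (a-b-1)/2))"
    unfolding H1fn_def by (rule ext) (simp add: mult.assoc)
  show ?thesis unfolding e H2fn_def
  by (rule DERIV_cong[OF DERIV_diff[OF DERIV_cmult[OF DERIV_mult[OF DERIV_mult[OF DERIV_ident dP] dB], of "p+b"]
       DERIV_cmult[OF dP]]]) (simp add: algebra_simps)
qed

lemma key_r:
  fixes u v p b :: real
  assumes "v \<noteq> 0"
  shows "sqrt (u^2+v^2) powr p * \<bar>sqrt (u^2+v^2) / v\<bar> powr b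
       = \<bar>v\<bar> powr p * ((u/\<bar>v\<bar>)^2+1) powr ((p+b)/2)"
proof -
  define V where "V = \<bar>v\<bar>"
  define s where "s = u/V"
  have V: "V > 0" using assms by (simp add: V_def)
  have "u^2+v^2 = V^2 * (s^2+1)" using V by (simp add: V_def s_def field_simps)
  then have r: "sqrt (u^2+v^2) = V * sqrt (s^2+1)"
    using V by (simp add: real_sqrt_mult)
  have rv: "\<bar>sqrt (u^2+v^2) / v\<bar> = sqrt (s^2+1)"
    unfolding r using V by (simp add: V_def abs_mult)
  have "sqrt (u^2+v^2) powr p * \<bar>sqrt (u^2+v^2) / v\<bar> powr b
      = V powr p * (sqrt (s^2+1) powr p * sqrt (s^2+1) powr b)"
    unfolding rv unfolding r using V by (simp add: powr_mult)
  also have "sqrt (s^2+1) powr p * sqrt (s^2+1) powr b = (s^2+1) powr ((p+b)/2)"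
    by (simp add: powr_add[symmetric] powr_half_sqrt[symmetric] powr_powr add_divide_distrib)
  finally show ?thesis by (simp add: V_def s_def)
qed

lemma phi1_eq:
  assumes "v \<noteq> 0"
  shows "phi1 C p q a b u v z = \<bar>v\<bar> powr p * z powr q * Hfn C p a b (u/\<bar>v\<bar>)"
proof -
  have "phi1 C p q a b u v z = (sqrt (u^2+v^2) powr p * \<bar>sqrt (u^2+v^2) / v\<bar> powr b) * z powr q * Bfn C a b (u/\<bar>v\<bar>)"
    unfolding phi1_def Bfn_def Let_def by (simp add: algebra_simps)
  then show ?thesis unfolding key_r[OF assms] Hfn_def by (simp add: algebra_simps)
qed

lemma du:
  assumes dG: "\<And>s. (G has_real_derivative G1 s) (at s)" and V: "V \<noteq> 0"
  shows "((\<lambda>x. A * G (x/V)) has_real_derivative A * G1 (x/V) / V) (at x)"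
proof -
  have "((\<lambda>x. x/V) has_real_derivative 1/V) (at x)"
    using DERIV_cdivide[OF DERIV_ident, of V] by simp
  from DERIV_cmult[OF DERIV_chain2[OF dG this], of A] show ?thesis by simp
qed

lemma dv:
  assumes dG: "\<And>s. (G has_real_derivative G1 s) (at s)" and sg: "\<sigma> = 1 \<or> \<sigma> = -1" and y: "\<sigma> * y > 0"
  shows "((\<lambda>y. (\<sigma> * y) powr k * G (u/(\<sigma> * y))) has_real_derivative
     \<sigma> * ((\<sigma> * y) powr (k-1) * (k * G (u/(\<sigma> * y)) - (u/(\<sigma> * y)) * G1 (u/(\<sigma> * y))))) (at y)"
proof -
  have s2: "\<sigma> * \<sigma> = 1" using sg by auto
  have d1: "((\<lambda>y. \<sigma> * y) has_real_derivative \<sigma>) (at y)"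
    using DERIV_cmult[OF DERIV_ident, of \<sigma>] by simp
  have p1: "((\<lambda>y. (\<sigma> * y) powr k) has_real_derivative k * (\<sigma> * y) powr (k-1) * \<sigma>) (at y)"
    using DERIV_fun_powr[OF d1 y, of k] by simp
  have d2: "((\<lambda>y. u/(\<sigma> * y)) has_real_derivative -(u * \<sigma>)/((\<sigma> * y) * (\<sigma> * y))) (at y)"
    using y by (auto intro!: derivative_eq_intros simp: field_simps power2_eq_square)
  have g: "((\<lambda>y. G (u/(\<sigma> * y))) has_real_derivative G1 (u/(\<sigma> * y)) * (-(u * \<sigma>)/((\<sigma> * y) * (\<sigma> * y)))) (at y)"
    by (rule DERIV_chain2[OF dG d2])
  have w: "(\<sigma> * y) powr k = (\<sigma> * y) powr (k-1) * (\<sigma> * y)"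
    using y by (simp add: powr_diff)
  show ?thesis
    apply (rule DERIV_cong[OF DERIV_mult[OF p1 g]])
    using y s2 unfolding w by (simp add: field_simps)
qed

lemma dz:
  assumes "z > 0"
  shows "((\<lambda>w. A * w powr q * B) has_real_derivative A * (q * z powr (q-1)) * B) (at z)"
  using DERIV_cmult[OF DERIV_cmult[OF has_real_derivative_powr[OF assms, of q], of A], of B]
  by (simp add: algebra_simps)


lemma pdu_D:
  assumes v: "v \<noteq> 0"
  shows "((\<lambda>x. phi1 C p q a b x v z) has_real_derivative
     \<bar>v\<bar> powr p * z powr q * H1fn C p a b (u/\<bar>v\<bar>) / \<bar>v\<bar>) (at u)"
proof -
  have e: "(\<lambda>x. phi1 C p q a b x v z) = (\<lambda>x. (\<bar>v\<bar> powr p * z powr q) * Hfn C p a b (x/\<bar>v\<bar>))"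
    using phi1_eq[OF v] by (intro ext) simp
  show ?thesis unfolding e by (rule du[OF dH]) (use v in simp)
qed

lemma pdu:
  assumes v: "v \<noteq> 0"
  shows "pd_u (phi1 C p q a b) u v z = \<bar>v\<bar> powr p * z powr q * H1fn C p a b (u/\<bar>v\<bar>) / \<bar>v\<bar>"
  unfolding pd_u_def by (rule DERIV_imp_deriv[OF pdu_D[OF v]])

lemma pduu:
  assumes v: "v \<noteq> 0"
  shows "pd_u (pd_u (phi1 C p q a b)) u v z = \<bar>v\<bar> powr p * z powr q / \<bar>v\<bar> * H2fn C p a b (u/\<bar>v\<bar>) / \<bar>v\<bar>"
proof -
  have e: "(\<lambda>x. pd_u (phi1 C p q a b) x v z) = (\<lambda>x. (\<bar>v\<bar> powr p * z powr q / \<bar>v\<bar>) * H1fn C p a b (x/\<bar>v\<bar>))"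
    using pdu[OF v] by (intro ext) simp
  have "((\<lambda>x. pd_u (phi1 C p q a b) x v z) has_real_derivative
     \<bar>v\<bar> powr p * z powr q / \<bar>v\<bar> * H2fn C p a b (u/\<bar>v\<bar>) / \<bar>v\<bar>) (at u)"
    unfolding e by (rule du[OF dH1]) (use v in simp)
  then show ?thesis unfolding pd_u_def by (rule DERIV_imp_deriv)
qed

lemma pdv_D:
  assumes v: "v \<noteq> 0"
  shows "((\<lambda>y. phi1 C p q a b u y z) has_real_derivative
     z powr q * (sgn v * (\<bar>v\<bar> powr (p-1) * (p * Hfn C p a b (u/\<bar>v\<bar>) - (u/\<bar>v\<bar>) * H1fn C p a b (u/\<bar>v\<bar>))))) (at v)"
proof -
  define \<sigma> where "\<sigma> = sgn v"
  have sg: "\<sigma> = 1 \<or> \<sigma> = -1" using v by (auto simp: \<sigma>_def sgn_real_def)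
  have sv: "\<sigma> * v = \<bar>v\<bar>" using v by (auto simp: \<sigma>_def sgn_real_def)
  have "((\<lambda>y. z powr q * ((\<sigma> * y) powr p * Hfn C p a b (u/(\<sigma> * y)))) has_real_derivative
     z powr q * (\<sigma> * ((\<sigma> * v) powr (p-1) * (p * Hfn C p a b (u/(\<sigma> * v)) - (u/(\<sigma> * v)) * H1fn C p a b (u/(\<sigma> * v)))))) (at v)"
    by (rule DERIV_cmult[OF dv[OF dH sg]]) (use v sv in simp)
  note D = this[unfolded sv]
  show ?thesis unfolding \<sigma>_def[symmetric]
  proof (rule has_field_derivative_transform_within_open[OF D, of "{y. \<sigma> * y > 0}"])
    show "open {y. \<sigma> * y > 0}" by (intro open_Collect_less continuous_intros)
    show "v \<in> {y. \<sigma> * y > 0}" using sv v by simp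
    fix y assume "y \<in> {y. \<sigma> * y > 0}"
    then have "\<sigma> * y > 0" by simp
    then have "\<bar>y\<bar> = \<sigma> * y" "y \<noteq> 0" using sg by auto
    then show "z powr q * ((\<sigma> * y) powr p * Hfn C p a b (u/(\<sigma> * y))) = phi1 C p q a b u y z"
      using phi1_eq[of y] by (simp add: algebra_simps)
  qed
qed

lemma pdv:
  assumes v: "v \<noteq> 0"
  shows "pd_v (phi1 C p q a b) u v z = 
     z powr q * (sgn v * (\<bar>v\<bar> powr (p-1) * (p * Hfn C p a b (u/\<bar>v\<bar>) - (u/\<bar>v\<bar>) * H1fn C p a b (u/\<bar>v\<bar>))))"
  unfolding pd_v_def by (rule DERIV_imp_deriv[OF pdv_D[OF v]])

lemma pdvv:
  assumes v: "v \<noteq> 0"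
  shows "pd_v (pd_v (phi1 C p q a b)) u v z = z powr q * (\<bar>v\<bar> powr (p-1-1) *
     ((p-1) * (p * Hfn C p a b (u/\<bar>v\<bar>) - (u/\<bar>v\<bar>) * H1fn C p a b (u/\<bar>v\<bar>))
      - (u/\<bar>v\<bar>) * (p * H1fn C p a b (u/\<bar>v\<bar>) - (H1fn C p a b (u/\<bar>v\<bar>) + (u/\<bar>v\<bar>) * H2fn C p a b (u/\<bar>v\<bar>)))))"
proof -
  define \<sigma> where "\<sigma> = sgn v"
  have sg: "\<sigma> = 1 \<or> \<sigma> = -1" using v by (auto simp: \<sigma>_def sgn_real_def)
  have s2: "\<sigma> * \<sigma> = 1" using sg by auto
  have sv: "\<sigma> * v = \<bar>v\<bar>" using v by (auto simp: \<sigma>_def sgn_real_def)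
  define G where "G = (\<lambda>s. p * Hfn C p a b s - s * H1fn C p a b s)"
  have dG: "(G has_real_derivative (p * H1fn C p a b s - (H1fn C p a b s + s * H2fn C p a b s))) (at s)" for s
    unfolding G_def[abs_def]
    by (rule DERIV_cong[OF DERIV_diff[OF DERIV_cmult[OF dH] DERIV_mult[OF DERIV_ident dH1]]]) (simp add: algebra_simps)
  have "((\<lambda>y. (z powr q * \<sigma>) * ((\<sigma> * y) powr (p-1) * G (u/(\<sigma> * y)))) has_real_derivative
     (z powr q * \<sigma>) * (\<sigma> * ((\<sigma> * v) powr (p-1-1) * ((p-1) * G (u/(\<sigma> * v)) - (u/(\<sigma> * v)) *
        (p * H1fn C p a b (u/(\<sigma> * v)) - (H1fn C p a b (u/(\<sigma> * v)) + (u/(\<sigma> * v)) * H2fn C p a b (u/(\<sigma> * v)))))))) (at v)"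
    by (rule DERIV_cmult[OF dv[OF dG sg]]) (use v sv in simp)
  note D0 = this[unfolded sv]
  have ss: "\<And>X. (z powr q * \<sigma>) * (\<sigma> * X) = z powr q * X"
    using s2 by (metis mult.assoc mult.left_commute mult_1_right)
  have D: "((\<lambda>y. (z powr q * \<sigma>) * ((\<sigma> * y) powr (p-1) * G (u/(\<sigma> * y)))) has_real_derivative
     z powr q * (\<bar>v\<bar> powr (p-1-1) *
     ((p-1) * (p * Hfn C p a b (u/\<bar>v\<bar>) - (u/\<bar>v\<bar>) * H1fn C p a b (u/\<bar>v\<bar>))
      - (u/\<bar>v\<bar>) * (p * H1fn C p a b (u/\<bar>v\<bar>) - (H1fn C p a b (u/\<bar>v\<bar>) + (u/\<bar>v\<bar>) * H2fn C p a b (u/\<bar>v\<bar>)))))) (at v)"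
    by (rule DERIV_cong[OF D0]) (simp only: ss G_def)
  have "((\<lambda>y. pd_v (phi1 C p q a b) u y z) has_real_derivative
     z powr q * (\<bar>v\<bar> powr (p-1-1) *
     ((p-1) * (p * Hfn C p a b (u/\<bar>v\<bar>) - (u/\<bar>v\<bar>) * H1fn C p a b (u/\<bar>v\<bar>))
      - (u/\<bar>v\<bar>) * (p * H1fn C p a b (u/\<bar>v\<bar>) - (H1fn C p a b (u/\<bar>v\<bar>) + (u/\<bar>v\<bar>) * H2fn C p a b (u/\<bar>v\<bar>)))))) (at v)"
  proof (rule has_field_derivative_transform_within_open[OF D, of "{y. \<sigma> * y > 0}"])
    show "open {y. \<sigma> * y > 0}" by (intro open_Collect_less continuous_intros)
    show "v \<in> {y. \<sigma> * y > 0}" using sv v by simp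
    fix y assume "y \<in> {y. \<sigma> * y > 0}"
    then have "\<sigma> * y > 0" by simp
    then have "\<bar>y\<bar> = \<sigma> * y" "y \<noteq> 0" "sgn y = \<sigma>" using sg by (auto simp: sgn_real_def)
    then have "pd_v (phi1 C p q a b) u y z = z powr q * (\<sigma> * ((\<sigma> * y) powr (p-1) * G (u/(\<sigma> * y))))"
      using pdv[of y C p q a b u z] unfolding G_def by simp
    then show "(z powr q * \<sigma>) * ((\<sigma> * y) powr (p-1) * G (u/(\<sigma> * y))) = pd_v (phi1 C p q a b) u y z"
      by (simp add: mult.assoc)
  qed
  then show ?thesis unfolding pd_v_def by (rule DERIV_imp_deriv)
qed

lemma pdz_D:
  assumes v: "v \<noteq> 0" and z: "z > 0"
  shows "((\<lambda>w. phi1 C p q a b u v w) has_real_derivative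
     \<bar>v\<bar> powr p * (q * z powr (q-1)) * Hfn C p a b (u/\<bar>v\<bar>)) (at z)"
proof -
  have e: "(\<lambda>w. phi1 C p q a b u v w) = (\<lambda>w. \<bar>v\<bar> powr p * w powr q * Hfn C p a b (u/\<bar>v\<bar>))"
    using phi1_eq[OF v] by (intro ext) simp
  show ?thesis unfolding e by (rule dz[OF z])
qed

lemma pdz:
  assumes v: "v \<noteq> 0" and z: "z > 0"
  shows "pd_z (phi1 C p q a b) u v z = \<bar>v\<bar> powr p * (q * z powr (q-1)) * Hfn C p a b (u/\<bar>v\<bar>)"
  unfolding pd_z_def by (rule DERIV_imp_deriv[OF pdz_D[OF v z]])


lemma LBINT_same: "(LBINT t=x..x. f t) = (0::real)"
  by (simp add: interval_lebesgue_integral_def set_lebesgue_integral_def einterval_same)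

lemma frac_mono:
  fixes t x :: real
  assumes "0 \<le> t" "t \<le> x"
  shows "t / sqrt (t^2+1) \<le> x / sqrt (x^2+1)"
proof -
  have "t^2 * (x^2+1) \<le> x^2 * (t^2+1)"
    using assms by (simp add: algebra_simps power_mono)
  then have "sqrt (t^2 * (x^2+1)) \<le> sqrt (x^2 * (t^2+1))" by simp
  then have "t * sqrt (x^2+1) \<le> x * sqrt (t^2+1)"
    using assms by (simp add: real_sqrt_mult)
  then show ?thesis
    by (simp add: divide_simps)
qed

lemma B_lower:
  fixes C a b s :: real
  assumes C: "C > 0" and b: "0 < b" and ba: "b < a" and a1: "a < 1" and s: "s \<le> 1/C"
  shows "Bfn C a b s \<ge> min 1 (sqrt ((1/C)^2+1) / 2) * (s^2+1) powr (-b/2)"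
proof -
  define x where "x = 1/C"
  define \<theta> where "\<theta> = min 1 (sqrt (x^2+1) / 2)"
  define c where "c = b/(2 * C)"
  have x: "x > 0" using C by (simp add: x_def)
  have c: "c = b * x / 2" by (simp add: c_def x_def)
  define D where "D = (\<lambda>t. Bfn C a b t - \<theta> * (t^2+1) powr (-b/2))"
  have dD: "(D has_real_derivative
      - (b/(2 * C) * (t^2+1) powr ((a-b-1)/2)) - \<theta> * ((-b/2) * (t^2+1) powr (-b/2-1) * (2 * t))) (at t)" for t
    unfolding D_def[abs_def] by (rule DERIV_diff[OF dB DERIV_cmult[OF dP]])
  have neg: "- (b/(2 * C) * (t^2+1) powr ((a-b-1)/2)) - \<theta> * ((-b/2) * (t^2+1) powr (-b/2-1) * (2 * t)) \<le> 0"
    if t: "t \<le> x" for t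
  proof -
    define P where "P = t^2+1"
    have P: "P \<ge> 1" by (simp add: P_def)
    have split: "P powr (-b/2-1) = P powr ((a-b-1)/2) * P powr (-(1+a)/2)"
      using P by (simp add: powr_add[symmetric] field_simps)
    have key: "\<theta> * t * P powr (-(1+a)/2) \<le> x/2"
    proof (cases "t \<le> 0")
      case True
      have "\<theta> \<ge> 0" by (simp add: \<theta>_def)
      then have "\<theta> * t * P powr (-(1+a)/2) \<le> 0"
        using True by (simp add: mult_nonneg_nonpos mult_nonneg_nonpos2)
      then show ?thesis using x by simp
    next
      case False
      have "P powr (-(1+a)/2) \<le> P powr (-1/2)"
        using P ba b by (intro powr_mono) auto
      also have "P powr (-1/2) = 1 / sqrt P"
        using P by (simp add: powr_minus_divide powr_half_sqrt)
      finally have h0: "P powr (-(1+a)/2) \<le> 1 / sqrt P" .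
      have h1: "t * P powr (-(1+a)/2) \<le> t / sqrt P"
        using mult_left_mono[OF h0, of t] False by simp
      have h2: "t / sqrt P \<le> x / sqrt (x^2+1)"
        unfolding P_def by (rule frac_mono) (use False t in auto)
      have th: "0 \<le> \<theta>" "\<theta> \<le> sqrt (x^2+1) / 2" by (auto simp: \<theta>_def)
      have "\<theta> * t * P powr (-(1+a)/2) \<le> \<theta> * (x / sqrt (x^2+1))"
        using mult_left_mono[OF order_trans[OF h1 h2] th(1)] by (simp add: mult.assoc)
      also have "\<dots> \<le> sqrt (x^2+1) / 2 * (x / sqrt (x^2+1))"
        using th x by (intro mult_right_mono) auto
      also have "\<dots> = x/2"
        using P_pos[of x] by (simp add: field_simps del: P_pos)
      finally show ?thesis .
    qed
    have e0: "P powr ((a-b-1)/2) \<ge> 0" by simp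
    have eq1: "\<theta> * ((-b/2) * P powr (-b/2-1) * (2 * t)) = - (b * P powr ((a-b-1)/2) * (\<theta> * t * P powr (-(1+a)/2)))"
      unfolding split by (simp add: algebra_simps)
    have "b * P powr ((a-b-1)/2) * (\<theta> * t * P powr (-(1+a)/2)) \<le> b * P powr ((a-b-1)/2) * (x/2)"
      using key b e0 by (intro mult_left_mono) auto
    also have "\<dots> = b/(2 * C) * P powr ((a-b-1)/2)" by (simp add: x_def)
    finally have le: "b * P powr ((a-b-1)/2) * (\<theta> * t * P powr (-(1+a)/2)) \<le> b/(2 * C) * P powr ((a-b-1)/2)" .
    show ?thesis
      unfolding P_def[symmetric] eq1 using le by linarith
  qed
  have "D x \<le> D s"
    by (rule DERIV_nonpos_imp_nonincreasing[OF s[folded x_def]]) (use dD neg in blast)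
  moreover have "D x = (1 - \<theta>) * (x^2+1) powr (-b/2)"
  proof -
    have "C powr (-2) + 1 = x^2 + 1"
      using C by (simp add: x_def powr_minus_divide power2_eq_square)
    then have Bx: "Bfn C a b x = (x^2+1) powr (-b/2)"
      unfolding Bfn_def x_def[symmetric] LBINT_same by (simp add: powr_minus_divide)
    show ?thesis unfolding D_def Bx by (simp add: algebra_simps)
  qed
  moreover have "(1 - \<theta>) * (x^2+1) powr (-b/2) \<ge> 0"
    by (auto simp: \<theta>_def)
  ultimately have "0 \<le> D s" by linarith
  then show ?thesis unfolding D_def \<theta>_def x_def by simp
qed


lemma cont_B: "continuous_on S (Bfn C a b)"
  using dB by (intro continuous_at_imp_continuous_on ballI DERIV_isCont) blast
lemma cont_H: "continuous_on S (Hfn C p a b)"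
  using dH by (intro continuous_at_imp_continuous_on ballI DERIV_isCont) blast
lemma cont_H1: "continuous_on S (H1fn C p a b)"
  using dH1 by (intro continuous_at_imp_continuous_on ballI DERIV_isCont) blast
lemma cont_H2: "continuous_on S (H2fn C p a b)"
  unfolding H2fn_def
  by (intro continuous_intros cont_B) auto

lemma cont_bound:
  fixes f :: "real \<Rightarrow> real"
  assumes "continuous_on {lo..hi} f"
  shows "\<exists>M. \<forall>s\<in>{lo..hi}. \<bar>f s\<bar> \<le> M"
proof -
  have "compact (f ` {lo..hi})" by (rule compact_continuous_image[OF assms compact_Icc])
  then have "bounded (f ` {lo..hi})" by (rule compact_imp_bounded)
  then show ?thesis unfolding bounded_real by auto
qed

lemma L_alg:
  fixes \<gamma> h k1 k2 p q b V s \<sigma> Zq z z23 Vp H0 H1 H2 :: real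
  assumes V: "V > 0" and z: "z > 0" and z23: "z23 > 0" and sg: "\<sigma> * \<sigma> = 1"
    and b: "b = (1/3 + 2/3 * h) * p - (1-h) * q"
  shows "- \<gamma> * (s * V) * (Vp * Zq * H1 / V) - \<gamma> * (\<sigma> * V) * (Zq * (\<sigma> * (Vp / V * (p * H0 - s * H1))))
     - ((1/3 + 2/3 * h) * (s * V)^2 - (\<sigma> * V)^2) / z23 * (Vp * Zq * H1 / V)
     - ((1/3 + 2/3 * h) + 1) * (s * V) * (\<sigma> * V) / z23 * (Zq * (\<sigma> * (Vp / V * (p * H0 - s * H1))))
     + (1-h) * (s * V) * (z / z23) * (Vp * (q * (Zq / z)) * H0)
     + k1 / z23 * (Vp * Zq / V * H2 / V)
     + k2 / z23 * (Zq * (Vp / (V * V) * ((p-1) * (p * H0 - s * H1) - s * (p * H1 - (H1 + s * H2)))))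
   = - \<gamma> * p * (Vp * Zq * H0) + Vp * Zq * V / z23 * ((s^2+1) * H1 - (p+b) * s * H0)
     + Vp * Zq / z23 / V^2 * (k1 * H2 + k2 * ((p-1) * (p * H0 - s * H1) - s * (p * H1 - (H1 + s * H2))))"
proof -
  have s2: "(\<sigma> * V)^2 = V^2" using sg by (simp add: power2_eq_square algebra_simps)
  have s3: "\<sigma> * (\<sigma> * X) = X" for X using sg by (simp add: mult.assoc[symmetric])
  show ?thesis
    unfolding s2 b using V z z23
    by (simp add: field_simps power2_eq_square s3)
qed


lemma drift:
  "(s^2+1) * H1fn C p a b s - (p+b) * s * Hfn C p a b s = -(b/(2 * C)) * (s^2+1) powr ((p+a+1)/2)"
proof -
  have e1: "(s^2+1) * (s^2+1) powr ((p+b)/2 - 1) = (s^2+1) powr ((p+b)/2)"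
    using powr_add[of "s^2+1" "(p+b)/2 - 1" 1] by simp
  have ex: "(p+a+1)/2 = (p+b)/2 + (a-b-1)/2 + 1" by (simp add: field_simps)
  have e2: "(s^2+1) * (s^2+1) powr ((p+b)/2 + (a-b-1)/2) = (s^2+1) powr ((p+a+1)/2)"
    unfolding ex powr_add by simp
  define k where "k = b/(2 * C)"
  have "(s^2+1) * H1fn C p a b s = (p+b) * s * ((s^2+1) * (s^2+1) powr ((p+b)/2 - 1)) * Bfn C a b s
     - k * ((s^2+1) * (s^2+1) powr ((p+b)/2 + (a-b-1)/2))"
    unfolding H1fn_def k_def[symmetric] by (simp add: algebra_simps)
  then show ?thesis unfolding e1 e2 Hfn_def k_def[symmetric] by (simp add: algebra_simps)
qed

lemma H_nonneg:
  assumes C: "C > 0" and b: "0 < b" and ba: "b < a" and a1: "a < 1" and s: "s \<le> 1/C"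
  shows "Hfn C p a b s \<ge> 0"
proof -
  have "Bfn C a b s \<ge> min 1 (sqrt ((1/C)^2+1) / 2) * (s^2+1) powr (-b/2)"
    by (rule B_lower[OF assms])
  moreover have "min 1 (sqrt ((1/C)^2+1) / 2) * (s^2+1) powr (-b/2) \<ge> 0" by simp
  ultimately have "Bfn C a b s \<ge> 0" by linarith
  then show ?thesis unfolding Hfn_def by simp
qed

lemma L_part:
  fixes \<gamma> h \<kappa>1 \<kappa>2 p q a b C :: real
  assumes g: "\<gamma> > 0" and h0: "0 < h" and h1: "h < 1" and k1: "\<kappa>1 > 0" and k2: "\<kappa>2 > 0"
    and p: "p > 0" and b: "b = alpha_h h * p - (1 - h) * q" and b0: "0 < b" and ba: "b < a" and a1: "a < 1"
    and C: "C > 0"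
  shows "\<exists>R0>0. \<forall>rs \<ge> R0. \<forall>u v z. region1 rs C u v z \<longrightarrow>
     Lop \<gamma> h \<kappa>1 \<kappa>2 (phi1 C p q a b) u v z
       \<le> - (b / (2 * C)) / 2 * sqrt (u^2+v^2) powr (p + 1) * z powr q * \<bar>sqrt (u^2+v^2) / v\<bar> powr a"
proof -
  define Df where "Df = (\<lambda>s. \<kappa>1 * H2fn C p a b s + \<kappa>2 * ((p-1) * (p * Hfn C p a b s - s * H1fn C p a b s)
      - s * (p * H1fn C p a b s - (H1fn C p a b s + s * H2fn C p a b s))))"
  have "continuous_on {-C..1/C} Df"
    unfolding Df_def by (intro continuous_intros cont_H cont_H1 cont_H2)
  then obtain M where M: "\<And>s. s \<in> {-C..1/C} \<Longrightarrow> \<bar>Df s\<bar> \<le> M"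
    using cont_bound by blast
  define c where "c = b / (2 * C)"
  have c: "c > 0" using b0 C by (simp add: c_def)
  define m0 where "m0 = max C (1/C)"
  define T where "T = max 1 (2 * M / c)"
  define R0 where "R0 = T * sqrt (1 + m0^2)"
  have T1: "T \<ge> 1" by (simp add: T_def)
  have R0: "R0 > 0" using T1 by (simp add: R0_def add_pos_nonneg)
  show ?thesis
  proof (intro exI[of _ R0] conjI allI impI R0)
    fix rs u v z
    assume rs: "rs \<ge> R0" and reg: "region1 rs C u v z"
    from reg have r: "sqrt (u^2+v^2) \<ge> rs" and ub: "\<bar>v\<bar> / C \<ge> u" and lb: "u \<ge> - C * \<bar>v\<bar>"
      and z0: "0 < z" and z1: "z \<le> 1"
      unfolding region1_def by auto
    have v: "v \<noteq> 0"
    proof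
      assume "v = 0"
      with ub lb have "u = 0" by simp
      with \<open>v = 0\<close> r rs R0 show False by simp
    qed
    define V where "V = \<bar>v\<bar>"
    have V: "V > 0" using v by (simp add: V_def)
    define s where "s = u / V"
    have u_eq: "u = s * V" using V by (simp add: s_def)
    define \<sigma> where "\<sigma> = sgn v"
    have v_eq: "v = \<sigma> * V" by (simp add: \<sigma>_def V_def sgn_mult_abs)
    have sg: "\<sigma> * \<sigma> = 1" using v by (simp add: \<sigma>_def sgn_real_def)
    have sC: "s \<le> 1/C" using ub V C by (simp add: s_def V_def field_simps)
    have sC2: "s \<ge> -C" using lb V C by (simp add: s_def V_def field_simps)
    have sm: "s^2 \<le> m0^2"
    proof -
      have "\<bar>s\<bar> \<le> m0" using sC sC2 C by (auto simp: m0_def abs_if)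
      then show ?thesis by (metis abs_ge_zero power2_abs power_mono)
    qed
    have VT: "V \<ge> T"
    proof -
      have rr: "sqrt (u^2+v^2) = V * sqrt (s^2+1)"
      proof -
        have "u^2+v^2 = V^2 * (s^2+1)" unfolding u_eq using V by (simp add: V_def field_simps power2_eq_square)
        then show ?thesis using V by (simp add: real_sqrt_mult)
      qed
      have "T * sqrt (1 + m0^2) \<le> V * sqrt (s^2+1)" using rs r unfolding R0_def rr by linarith
      also have "\<dots> \<le> V * sqrt (1 + m0^2)" using sm V by (intro mult_left_mono) auto
      finally show ?thesis by (smt (verit) mult_le_cancel_right real_sqrt_gt_zero P_pos power2_eq_square)
    qed
    define z23 where "z23 = z powr (2/3)"
    have z23: "z23 > 0" "z23 \<le> 1" using z0 z1 by (auto simp: z23_def powr_le1)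
    have z13: "z powr (1/3) = z / z23"
    proof -
      have "z powr (1/3) * z powr (2/3) = z" using z0 by (simp add: powr_add[symmetric])
      then show ?thesis using z23 by (simp add: z23_def field_simps)
    qed
    have Vp1: "V powr (p-1) = V powr p / V" using V by (simp add: powr_diff)
    have Vp2: "V powr (p-1-1) = V powr p / (V * V)" using V by (simp add: powr_diff power2_eq_square)
    have zq1: "z powr (q-1) = z powr q / z" using z0 by (simp add: powr_diff)
    have bb: "b = (1/3 + 2/3 * h) * p - (1-h) * q" using b by (simp add: alpha_h_def)
    have Lexp: "Lop \<gamma> h \<kappa>1 \<kappa>2 (phi1 C p q a b) u v z =
        - \<gamma> * p * (V powr p * z powr q * Hfn C p a b s)
        + V powr p * z powr q * V / z23 * ((s^2+1) * H1fn C p a b s - (p+b) * s * Hfn C p a b s)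
        + V powr p * z powr q / z23 / V^2 * Df s"
      unfolding Lop_def pdu[OF v] pdv[OF v] pdz[OF v z0] pduu[OF v] pdvv[OF v]
      unfolding V_def[symmetric] s_def[symmetric] \<sigma>_def[symmetric] Vp1 Vp2 zq1 z13
      unfolding Df_def alpha_h_def z23_def[symmetric]
      unfolding u_eq v_eq
      by (rule L_alg[OF V z0 z23(1) sg bb])
    define W where "W = (s^2+1) powr ((p+a+1)/2)"
    have W: "W \<ge> 1" unfolding W_def using p ba b0 by (intro ge_one_powr_ge_zero) auto
    have RHS: "- (b / (2 * C)) / 2 * sqrt (u^2+v^2) powr (p + 1) * z powr q * \<bar>sqrt (u^2+v^2) / v\<bar> powr a
        = - (c/2) * (V powr p * z powr q * V * W)"
    proof -
      have "sqrt (u^2+v^2) powr (p + 1) * \<bar>sqrt (u^2+v^2) / v\<bar> powr a = V powr (p+1) * W"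
        unfolding key_r[OF v] W_def V_def[symmetric] s_def[symmetric] by (simp add: add_ac)
      moreover have "V powr (p+1) = V powr p * V" using V by (simp add: powr_add)
      ultimately show ?thesis unfolding c_def by (simp add: algebra_simps)
    qed
    have H0: "Hfn C p a b s \<ge> 0" by (rule H_nonneg[OF C b0 ba a1 sC])
    define Y where "Y = V powr p * z powr q / z23"
    have Y: "Y > 0" using V z0 z23 by (simp add: Y_def)
    have VpZ: "V powr p * z powr q > 0" using V z0 by simp
    have t1: "- \<gamma> * p * (V powr p * z powr q * Hfn C p a b s) \<le> 0"
      using g p VpZ H0 by (simp add: mult_nonneg_nonneg)
    have t2: "V powr p * z powr q * V / z23 * ((s^2+1) * H1fn C p a b s - (p+b) * s * Hfn C p a b s)
        = - c * (Y * V * W)"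
      unfolding drift Y_def W_def c_def by (simp add: algebra_simps)
    have DfM: "Df s \<le> c/2 * V * V^2 * W"
    proof -
      have "Df s \<le> M" using M[of s] sC sC2 by auto
      also have "M \<le> c/2 * T"
      proof -
        have "2 * M / c \<le> T" unfolding T_def by simp
        then have "2 * M \<le> T * c" using c by (simp add: divide_le_eq)
        then show ?thesis by (simp add: mult.commute)
      qed
      also have "\<dots> \<le> c/2 * V" using VT c by simp
      also have "\<dots> \<le> c/2 * V * (V^2 * W)"
      proof -
        have "V^2 * W \<ge> 1" using VT T1 W by (smt (verit) mult_mono one_le_power power2_eq_square)
        from mult_left_mono[OF this, of "c/2 * V"] show ?thesis using c V by simp
      qed
      finally show ?thesis by (simp add: algebra_simps)
    qed
    have t3: "V powr p * z powr q / z23 / V^2 * Df s \<le> c/2 * (Y * V * W)"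
    proof -
      have "V powr p * z powr q / z23 / V^2 * Df s = Y * (Df s / V^2)" by (simp add: Y_def)
      also have "\<dots> \<le> Y * (c/2 * V * W)"
        using DfM V Y by (intro mult_left_mono) (auto simp: divide_simps algebra_simps)
      finally show ?thesis by (simp add: algebra_simps)
    qed
    have t4: "- (c/2) * (Y * V * W) \<le> - (c/2) * (V powr p * z powr q * V * W)"
    proof -
      have "V powr p * z powr q * z23 \<le> V powr p * z powr q * 1"
        using VpZ z23 by (intro mult_left_mono) auto
      then have "V powr p * z powr q \<le> Y" using z23 by (simp add: Y_def divide_simps)
      then have "V powr p * z powr q * (V * W) \<le> Y * (V * W)" using V W by (intro mult_right_mono) auto
      from mult_left_mono[OF this, of "c/2"] show ?thesis using c by (simp add: algebra_simps)
    qed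
    show "Lop \<gamma> h \<kappa>1 \<kappa>2 (phi1 C p q a b) u v z
       \<le> - (b / (2 * C)) / 2 * sqrt (u^2+v^2) powr (p + 1) * z powr q * \<bar>sqrt (u^2+v^2) / v\<bar> powr a"
      unfolding Lexp RHS t2 using t1 t3 t4 by linarith
  qed
qed


lemma Q_single:
  assumes v: "v \<noteq> 0"
  shows "u / 3 * (\<bar>v\<bar> powr p * 1 powr q * H1fn C p a b (u/\<bar>v\<bar>) / \<bar>v\<bar>)
     + v / 3 * (1 powr q * (sgn v * (\<bar>v\<bar> powr (p-1) * (p * Hfn C p a b (u/\<bar>v\<bar>) - (u/\<bar>v\<bar>) * H1fn C p a b (u/\<bar>v\<bar>)))))
     - \<bar>v\<bar> powr p * (q * 1 powr (q-1)) * Hfn C p a b (u/\<bar>v\<bar>)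
   = (p/3 - q) * (\<bar>v\<bar> powr p * Hfn C p a b (u/\<bar>v\<bar>))"
proof -
  define V where "V = \<bar>v\<bar>"
  have V: "V > 0" using v by (simp add: V_def)
  define s where "s = u / V"
  have u_eq: "u = s * V" using V by (simp add: s_def)
  have vs: "v * sgn v = V" by (simp add: V_def abs_sgn mult.commute)
  have vs2: "\<And>X. v * (sgn v * X) = V * X" using vs by (metis mult.assoc)
  have Vp1: "V powr (p-1) = V powr p / V" using V by (simp add: powr_diff)
  show ?thesis
    unfolding V_def[symmetric] s_def[symmetric] Vp1
    apply (subst (1) u_eq)
    using V by (simp add: field_simps) (simp only: vs2, simp add: algebra_simps)
qed

lemma Q_part:
  fixes p1 p2 q1 q2 a1 a2 b1 b2 C :: real
  assumes "p1 > 0" and "p2 > 0" and "q1 = 0" and "q2 > 0"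
    and "0 < b1" and "b1 < a1" and "a1 < 1"
    and "0 < b2" and "b2 < a2" and "a2 < 1"
    and "q2 > p2 / 3 + a2 / 2" and "p2 > p1" and "C > 0"
  shows "\<exists>R>0. \<forall>rs \<ge> R. \<forall>u v. region1 rs C u v 1 \<longrightarrow>
        Qop (\<lambda>u v z. phi1 C p1 q1 a1 b1 u v z + phi1 C p2 q2 a2 b2 u v z) u v 1
          \<le> - (q2/2 - p2/6) * sqrt (u^2+v^2) powr p2"
proof -
  have "continuous_on {-C..1/C} (Hfn C p1 a1 b1)" by (rule cont_H)
  then obtain M1 where M1: "\<And>s. s \<in> {-C..1/C} \<Longrightarrow> \<bar>Hfn C p1 a1 b1 s\<bar> \<le> M1"
    using cont_bound by blast
  have M10: "M1 \<ge> 0" using M1[of 0] assms by auto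
  define \<theta> where "\<theta> = min 1 (sqrt ((1/C)^2+1) / 2)"
  have th: "\<theta> > 1/2"
  proof -
    have "sqrt ((1/C)^2+1) > 1" using assms by (simp add: real_less_rsqrt)
    then show ?thesis by (simp add: \<theta>_def)
  qed
  define d where "d = q2 - p2/3"
  have d: "d > 0" using assms by (simp add: d_def)
  define N where "N = (p1/3 * M1) / (d * (\<theta> - 1/2))"
  have N: "N \<ge> 0" using M10 d th assms by (simp add: N_def)
  define R where "R = max 1 ((N+1) powr (1/(p2-p1)))"
  have R1: "R \<ge> 1" by (simp add: R_def)
  show ?thesis
  proof (intro exI[of _ R] conjI allI impI)
    show "R > 0" using R1 by simp
    fix rs u v
    assume rs: "rs \<ge> R" and reg: "region1 rs C u v 1"
    from reg have r: "sqrt (u^2+v^2) \<ge> rs" and ub: "\<bar>v\<bar> / C \<ge> u" and lb: "u \<ge> - C * \<bar>v\<bar>"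
      unfolding region1_def by auto
    have v: "v \<noteq> 0"
    proof
      assume "v = 0"
      with ub lb have "u = 0" by simp
      with \<open>v = 0\<close> r rs R1 show False by simp
    qed
    define V where "V = \<bar>v\<bar>"
    have V: "V > 0" using v by (simp add: V_def)
    define s where "s = u / V"
    have sC: "s \<le> 1/C" using ub V assms by (simp add: s_def V_def field_simps)
    have sC2: "s \<ge> -C" using lb V assms by (simp add: s_def V_def field_simps)
    define r where "r = sqrt (u^2+v^2)"
    have rR: "r \<ge> R" using r rs by (simp add: r_def)
    have Vr: "V \<le> r" unfolding V_def r_def by (rule real_sqrt_ge_abs2)
    have one: "(1::real) > 0" by simp
    have Qeq: "Qop (\<lambda>u v z. phi1 C p1 q1 a1 b1 u v z + phi1 C p2 q2 a2 b2 u v z) u v 1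
      = (p1/3 - q1) * (V powr p1 * Hfn C p1 a1 b1 s) + (p2/3 - q2) * (V powr p2 * Hfn C p2 a2 b2 s)"
    proof -
      have eu: "pd_u (\<lambda>u v z. phi1 C p1 q1 a1 b1 u v z + phi1 C p2 q2 a2 b2 u v z) u v 1
        = \<bar>v\<bar> powr p1 * 1 powr q1 * H1fn C p1 a1 b1 (u/\<bar>v\<bar>) / \<bar>v\<bar> + \<bar>v\<bar> powr p2 * 1 powr q2 * H1fn C p2 a2 b2 (u/\<bar>v\<bar>) / \<bar>v\<bar>"
        unfolding pd_u_def by (rule DERIV_imp_deriv[OF DERIV_add[OF pdu_D[OF v] pdu_D[OF v]]])
      have ev: "pd_v (\<lambda>u v z. phi1 C p1 q1 a1 b1 u v z + phi1 C p2 q2 a2 b2 u v z) u v 1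
        = 1 powr q1 * (sgn v * (\<bar>v\<bar> powr (p1-1) * (p1 * Hfn C p1 a1 b1 (u/\<bar>v\<bar>) - (u/\<bar>v\<bar>) * H1fn C p1 a1 b1 (u/\<bar>v\<bar>))))
        + 1 powr q2 * (sgn v * (\<bar>v\<bar> powr (p2-1) * (p2 * Hfn C p2 a2 b2 (u/\<bar>v\<bar>) - (u/\<bar>v\<bar>) * H1fn C p2 a2 b2 (u/\<bar>v\<bar>))))"
        unfolding pd_v_def by (rule DERIV_imp_deriv[OF DERIV_add[OF pdv_D[OF v] pdv_D[OF v]]])
      have ez: "pd_z (\<lambda>u v z. phi1 C p1 q1 a1 b1 u v z + phi1 C p2 q2 a2 b2 u v z) u v 1
        = \<bar>v\<bar> powr p1 * (q1 * 1 powr (q1-1)) * Hfn C p1 a1 b1 (u/\<bar>v\<bar>)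
        + \<bar>v\<bar> powr p2 * (q2 * 1 powr (q2-1)) * Hfn C p2 a2 b2 (u/\<bar>v\<bar>)"
        unfolding pd_z_def by (rule DERIV_imp_deriv[OF DERIV_add[OF pdz_D[OF v one] pdz_D[OF v one]]])
      have "Qop (\<lambda>u v z. phi1 C p1 q1 a1 b1 u v z + phi1 C p2 q2 a2 b2 u v z) u v 1
        = (u / 3 * (\<bar>v\<bar> powr p1 * 1 powr q1 * H1fn C p1 a1 b1 (u/\<bar>v\<bar>) / \<bar>v\<bar>)
     + v / 3 * (1 powr q1 * (sgn v * (\<bar>v\<bar> powr (p1-1) * (p1 * Hfn C p1 a1 b1 (u/\<bar>v\<bar>) - (u/\<bar>v\<bar>) * H1fn C p1 a1 b1 (u/\<bar>v\<bar>)))))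
     - \<bar>v\<bar> powr p1 * (q1 * 1 powr (q1-1)) * Hfn C p1 a1 b1 (u/\<bar>v\<bar>))
     + (u / 3 * (\<bar>v\<bar> powr p2 * 1 powr q2 * H1fn C p2 a2 b2 (u/\<bar>v\<bar>) / \<bar>v\<bar>)
     + v / 3 * (1 powr q2 * (sgn v * (\<bar>v\<bar> powr (p2-1) * (p2 * Hfn C p2 a2 b2 (u/\<bar>v\<bar>) - (u/\<bar>v\<bar>) * H1fn C p2 a2 b2 (u/\<bar>v\<bar>)))))
     - \<bar>v\<bar> powr p2 * (q2 * 1 powr (q2-1)) * Hfn C p2 a2 b2 (u/\<bar>v\<bar>))"
        unfolding Qop_def eu ev ez by (simp only: ring_distribs diff_divide_distrib add_divide_distrib)
      also have "\<dots> = (p1/3 - q1) * (V powr p1 * Hfn C p1 a1 b1 s) + (p2/3 - q2) * (V powr p2 * Hfn C p2 a2 b2 s)"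
        unfolding Q_single[OF v] V_def s_def ..
      finally show ?thesis .
    qed
    have P1: "V powr p1 * Hfn C p1 a1 b1 s \<le> r powr p1 * M1"
    proof -
      have "V powr p1 * Hfn C p1 a1 b1 s \<le> V powr p1 * M1"
        using M1[of s] sC sC2 by (intro mult_left_mono) auto
      also have "\<dots> \<le> r powr p1 * M1"
        using Vr V M10 assms by (intro mult_right_mono powr_mono2) auto
      finally show ?thesis .
    qed
    have P2: "V powr p2 * Hfn C p2 a2 b2 s \<ge> \<theta> * r powr p2"
    proof -
      have B: "Bfn C a2 b2 s \<ge> \<theta> * (s^2+1) powr (-b2/2)"
        unfolding \<theta>_def using B_lower[of C b2 a2 s] assms sC by simp
      have "Hfn C p2 a2 b2 s \<ge> (s^2+1) powr ((p2+b2)/2) * (\<theta> * (s^2+1) powr (-b2/2))"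
        unfolding Hfn_def using B by (intro mult_left_mono) auto
      also have "(s^2+1) powr ((p2+b2)/2) * (\<theta> * (s^2+1) powr (-b2/2)) = \<theta> * (s^2+1) powr (p2/2)"
        by (simp add: powr_add[symmetric] field_simps)
      finally have "V powr p2 * Hfn C p2 a2 b2 s \<ge> V powr p2 * (\<theta> * (s^2+1) powr (p2/2))"
        using V by (intro mult_left_mono) auto
      moreover have "r powr p2 = V powr p2 * (s^2+1) powr (p2/2)"
      proof -
        have "r \<noteq> 0" using rR R1 by simp
        then have "\<bar>r / v\<bar> \<noteq> 0" using v by simp
        then show ?thesis using key_r[OF v, of u p2 0] unfolding r_def[symmetric] V_def[symmetric] s_def[symmetric]
          by simp
      qed
      ultimately show ?thesis by (simp add: algebra_simps)
    qed
    have rN: "r powr p2 \<ge> N * r powr p1"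
    proof -
      have r1: "r \<ge> 1" using rR R1 by simp
      have "r powr (p2-p1) \<ge> ((N+1) powr (1/(p2-p1))) powr (p2-p1)"
        using rR assms N by (intro powr_mono2) (auto simp: R_def)
      also have "((N+1) powr (1/(p2-p1))) powr (p2-p1) = N+1"
        using assms N by (simp add: powr_powr)
      finally have "r powr (p2-p1) \<ge> N" by simp
      then have "r powr p1 * r powr (p2-p1) \<ge> r powr p1 * N" by (intro mult_left_mono) auto
      moreover have "r powr p1 * r powr (p2-p1) = r powr p2" by (simp add: powr_add[symmetric])
      ultimately show ?thesis by (simp add: mult.commute)
    qed
    have key: "p1/3 * M1 * r powr p1 \<le> d * (\<theta> - 1/2) * r powr p2"
    proof -
      have "p1/3 * M1 = d * (\<theta> - 1/2) * N" using d th by (simp add: N_def)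
      then have "p1/3 * M1 * r powr p1 = d * (\<theta> - 1/2) * (N * r powr p1)" by simp
      also have "\<dots> \<le> d * (\<theta> - 1/2) * r powr p2"
        using rN d th by (intro mult_left_mono) auto
      finally show ?thesis .
    qed
    have "Qop (\<lambda>u v z. phi1 C p1 q1 a1 b1 u v z + phi1 C p2 q2 a2 b2 u v z) u v 1
        = p1/3 * (V powr p1 * Hfn C p1 a1 b1 s) - d * (V powr p2 * Hfn C p2 a2 b2 s)"
      unfolding Qeq d_def using assms by (simp add: algebra_simps)
    also have "\<dots> \<le> p1/3 * (r powr p1 * M1) - d * (\<theta> * r powr p2)"
      using P1 P2 d assms by (intro diff_mono mult_left_mono) auto
    also have "\<dots> \<le> - (q2/2 - p2/6) * r powr p2"
      using key by (simp add: d_def algebra_simps)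
    finally show "Qop (\<lambda>u v z. phi1 C p1 q1 a1 b1 u v z + phi1 C p2 q2 a2 b2 u v z) u v 1
          \<le> - (q2/2 - p2/6) * sqrt (u^2+v^2) powr p2" by (simp add: r_def)
  qed
qed

theorem lemma6p2:
  fixes \<gamma> h \<kappa>1 \<kappa>2 p1 p2 q1 q2 a1 a2 b1 b2 C :: real
  assumes "\<gamma> > 0" and "0 < h" and "h < 1" and "\<kappa>1 > 0" and "\<kappa>2 > 0"
    and "p1 > 0" and "p2 > 0" and "q1 = 0" and "q2 > 0"
    and "b1 = alpha_h h * p1 - (1 - h) * q1" and "0 < b1" and "b1 < a1" and "a1 < 1"
    and "b2 = alpha_h h * p2 - (1 - h) * q2" and "0 < b2" and "b2 < a2" and "a2 < 1"
    and "q2 > p2 / 3 + a2 / 2" and "p2 > p1" and "p2 + 3/2 * a2 > p1 + 3/2 * a1"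
    and "C > 0"
  shows "\<exists>R0. \<forall>rs \<ge> R0. rs > 0 \<longrightarrow>
     (\<forall>u v z. region1 rs C u v z \<longrightarrow>
        Lop \<gamma> h \<kappa>1 \<kappa>2 (phi1 C p1 q1 a1 b1) u v z
          \<le> - (b1 / (2*C)) / 2 * sqrt (u^2+v^2) powr (p1 + 1) * z powr q1
              * \<bar>sqrt (u^2+v^2) / v\<bar> powr a1
      \<and> Lop \<gamma> h \<kappa>1 \<kappa>2 (phi1 C p2 q2 a2 b2) u v z
          \<le> - (b2 / (2*C)) / 2 * sqrt (u^2+v^2) powr (p2 + 1) * z powr q2
              * \<bar>sqrt (u^2+v^2) / v\<bar> powr a2)
   \<and> (\<forall>u v. region1 rs C u v 1 \<longrightarrow>
        Qop (\<lambda>u v z. phi1 C p1 q1 a1 b1 u v z + phi1 C p2 q2 a2 b2 u v z) u v 1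
          \<le> - (q2/2 - p2/6) * sqrt (u^2+v^2) powr p2)"
proof -
  obtain R1 where R1: "R1 > 0" and L1: "\<forall>rs \<ge> R1. \<forall>u v z. region1 rs C u v z \<longrightarrow>
     Lop \<gamma> h \<kappa>1 \<kappa>2 (phi1 C p1 q1 a1 b1) u v z
       \<le> - (b1 / (2 * C)) / 2 * sqrt (u^2+v^2) powr (p1 + 1) * z powr q1 * \<bar>sqrt (u^2+v^2) / v\<bar> powr a1"
    using L_part[of \<gamma> h \<kappa>1 \<kappa>2 p1 b1 q1 a1 C] assms by blast
  obtain R2 where R2: "R2 > 0" and L2: "\<forall>rs \<ge> R2. \<forall>u v z. region1 rs C u v z \<longrightarrow>
     Lop \<gamma> h \<kappa>1 \<kappa>2 (phi1 C p2 q2 a2 b2) u v z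
       \<le> - (b2 / (2 * C)) / 2 * sqrt (u^2+v^2) powr (p2 + 1) * z powr q2 * \<bar>sqrt (u^2+v^2) / v\<bar> powr a2"
    using L_part[of \<gamma> h \<kappa>1 \<kappa>2 p2 b2 q2 a2 C] assms by blast
  obtain R3 where R3: "R3 > 0" and Q: "\<forall>rs \<ge> R3. \<forall>u v. region1 rs C u v 1 \<longrightarrow>
        Qop (\<lambda>u v z. phi1 C p1 q1 a1 b1 u v z + phi1 C p2 q2 a2 b2 u v z) u v 1
          \<le> - (q2/2 - p2/6) * sqrt (u^2+v^2) powr p2"
    using Q_part[of p1 p2 q1 q2 b1 a1 b2 a2 C] assms by blast
  show ?thesis
  proof (intro exI[of _ "max R1 (max R2 R3)"] allI impI conjI)
    fix rs u v z assume rs: "rs \<ge> max R1 (max R2 R3)" and reg: "region1 rs C u v z"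
    show "Lop \<gamma> h \<kappa>1 \<kappa>2 (phi1 C p1 q1 a1 b1) u v z
          \<le> - (b1 / (2*C)) / 2 * sqrt (u^2+v^2) powr (p1 + 1) * z powr q1
              * \<bar>sqrt (u^2+v^2) / v\<bar> powr a1"
      using L1 reg by (meson rs max.bounded_iff)
    show "Lop \<gamma> h \<kappa>1 \<kappa>2 (phi1 C p2 q2 a2 b2) u v z
          \<le> - (b2 / (2*C)) / 2 * sqrt (u^2+v^2) powr (p2 + 1) * z powr q2
              * \<bar>sqrt (u^2+v^2) / v\<bar> powr a2"
      using L2 reg by (meson rs max.bounded_iff)
  next
    fix rs u v assume rs: "rs \<ge> max R1 (max R2 R3)" and reg: "region1 rs C u v 1"
    show "Qop (\<lambda>u v z. phi1 C p1 q1 a1 b1 u v z + phi1 C p2 q2 a2 b2 u v z) u v 1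
          \<le> - (q2/2 - p2/6) * sqrt (u^2+v^2) powr p2"
      using Q reg by (meson rs max.bounded_iff)
  qed
qed

end
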